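(* Let $\Sigma=\{c_1\prec c_2\prec\dots\prec c_\sigma\}$, let $n\ge1$ and nonnegative integers $n_c$ ($c\in\Sigma$) with $\sum_c n_c=n-1$ be given, and let $\mathcal U$, $\mathcal M$, $f$ be as in the context. A binary matrix $M\in\mathcal M$ belongs to $f(\mathcal U)$ if and only if its associated sequence $\mathcal L$ is a Łukasiewicz path.
   Context: A trie over a finite totally ordered alphabet $\Sigma$ of size $\sigma$ is a rooted ordered tree with edges labeled by symbols of $\Sigma$ such that edges leaving the same node have distinct labels and siblings are ordered by their incoming labels. For a node $u$, $out(u)\subseteq\Sigma$ is the set of labels of edges leaving $u$. $\mathcal U$ is the set of tries with $n$ nodes over $\Sigma$ in which exactly $n_c$ edges are labeled $c$, for each $c$. $\mathcal M$ is the set of all $\sigma\times n$ binary matrices $M$ such that, for every $i\in[\sigma]$, row $i$ of $M$ contains exactly $n_{c_i}$ ones. The map $f:\mathcal U\to\mathcal M$ sends a trie with nodes $u_1,\dots,u_n$ listed in pre-order (children visited in increasing label order) to the matrix $M$ with $M[i][j]=1$ iff $c_i\in out(u_j)$. For $M\in\mathcal M$, define integer sequences of length $n$ by $\mathcal D[i]=(\text{number of ones in column } i \text{ of } M)-1$ and $\mathcal L[i]=\sum_{j=1}^i\mathcal D[j]$. A Łukasiewicz path is an integer sequence $\mathcal L[1..n]$ with $\mathcal L[n]=-1$ and, for every $i\in[n-1]$, $\mathcal L[i]\ge 0$ and $\mathcal L[i+1]-\mathcal L[i]\ge -1$. *)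

theory Defs
  imports Main
begin

text \<open>Alphabet: \<Sigma> = {1..\<sigma>} with the natural order, c_i = i.
  A trie is a rooted ordered tree; each node stores the list of its outgoing
  edges (label, child subtree).\<close>

datatype trie = Node "(nat \<times> trie) list"

fun children :: "trie \<Rightarrow> (nat \<times> trie) list" where
  "children (Node cs) = cs"

fun wf_trie :: "nat \<Rightarrow> trie \<Rightarrow> bool" where
  "wf_trie \<sigma> (Node cs) =
     (sorted_wrt (<) (map fst cs) \<and> (\<forall>c \<in> set (map fst cs). 1 \<le> c \<and> c \<le> \<sigma>)
      \<and> (\<forall>p \<in> set cs. wf_trie \<sigma> (snd p)))"

text \<open>The sets out(u_1), ..., out(u_n) of the nodes listed in pre-order
  (children visited in increasing label order).\<close>
fun preorder_out :: "trie \<Rightarrow> nat set list" where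
  "preorder_out (Node cs) = set (map fst cs) # concat (map (\<lambda>p. preorder_out (snd p)) cs)"

fun edge_labels :: "trie \<Rightarrow> nat list" where
  "edge_labels (Node cs) = concat (map (\<lambda>p. fst p # edge_labels (snd p)) cs)"

definition num_nodes :: "trie \<Rightarrow> nat" where
  "num_nodes T = length (preorder_out T)"

definition tries_U :: "nat \<Rightarrow> nat \<Rightarrow> (nat \<Rightarrow> nat) \<Rightarrow> trie set" where
  "tries_U \<sigma> n ns = {T. wf_trie \<sigma> T \<and> num_nodes T = n \<and>
      (\<forall>c \<in> {1..\<sigma>}. count_list (edge_labels T) c = ns c)}"

text \<open>A \<sigma> x n binary matrix, rows 1..\<sigma>, columns 1..n, as a predicate
  that is False outside the index range.\<close>
definition mats_M :: "nat \<Rightarrow> nat \<Rightarrow> (nat \<Rightarrow> nat) \<Rightarrow> (nat \<Rightarrow> nat \<Rightarrow> bool) set" where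
  "mats_M \<sigma> n ns = {M. (\<forall>i j. M i j \<longrightarrow> i \<in> {1..\<sigma>} \<and> j \<in> {1..n}) \<and>
      (\<forall>i \<in> {1..\<sigma>}. card {j \<in> {1..n}. M i j} = ns i)}"

definition f_map :: "nat \<Rightarrow> trie \<Rightarrow> (nat \<Rightarrow> nat \<Rightarrow> bool)" where
  "f_map \<sigma> T = (\<lambda>i j. i \<in> {1..\<sigma>} \<and> j \<in> {1..num_nodes T} \<and> i \<in> preorder_out T ! (j - 1))"

definition seqD :: "nat \<Rightarrow> (nat \<Rightarrow> nat \<Rightarrow> bool) \<Rightarrow> nat \<Rightarrow> int" where
  "seqD \<sigma> M j = int (card {i \<in> {1..\<sigma>}. M i j}) - 1"

definition seqL :: "nat \<Rightarrow> (nat \<Rightarrow> nat \<Rightarrow> bool) \<Rightarrow> nat \<Rightarrow> int" where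
  "seqL \<sigma> M i = (\<Sum>j = 1..i. seqD \<sigma> M j)"

definition lukasiewicz_path :: "nat \<Rightarrow> (nat \<Rightarrow> int) \<Rightarrow> bool" where
  "lukasiewicz_path n L \<longleftrightarrow> L n = -1 \<and>
     (\<forall>i \<in> {1..n-1}. L i \<ge> 0 \<and> L (i + 1) - L i \<ge> -1)"

end

theory Submission
  imports Defs
begin

definition wt :: "nat set list \<Rightarrow> int" where
  "wt xs = sum_list (map (\<lambda>S. int (card S) - 1) xs)"

lemma wt_simps[simp]: "wt [] = 0" "wt (S # xs) = int (card S) - 1 + wt xs"
  "wt (xs @ ys) = wt xs + wt ys"
  by (auto simp: wt_def)

abbreviation pf :: "(nat \<times> trie) list \<Rightarrow> nat set list" where
  "pf cs \<equiv> concat (map (\<lambda>p. preorder_out (snd p)) cs)"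

lemma forest_w:
  assumes "\<forall>p\<in>set cs. wt (preorder_out (snd p)) = -1 \<and>
             (\<forall>i<length (preorder_out (snd p)). wt (take i (preorder_out (snd p))) \<ge> 0)"
  shows "wt (pf cs) = - int (length cs) \<and> (\<forall>i<length (pf cs). wt (take i (pf cs)) > - int (length cs))"
  using assms
proof (induction cs)
  case Nil
  then show ?case by simp
next
  case (Cons c cs)
  let ?A = "preorder_out (snd c)"
  have A: "wt ?A = -1" "\<forall>i<length ?A. wt (take i ?A) \<ge> 0" using Cons.prems by auto
  have B: "wt (pf cs) = - int (length cs)" "\<forall>i<length (pf cs). wt (take i (pf cs)) > - int (length cs)"
    using Cons by auto
  show ?case
  proof (intro conjI allI impI)
    show "wt (pf (c # cs)) = - int (length (c # cs))" using A B by simp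
    fix i assume i: "i < length (pf (c # cs))"
    show "wt (take i (pf (c # cs))) > - int (length (c # cs))"
    proof (cases "i < length ?A")
      case True
      then have "wt (take i ?A) \<ge> 0" using A(2) by blast
      then show ?thesis using True by simp
    next
      case False
      then have "i - length ?A < length (pf cs)" using i by simp
      then show ?thesis using False A B by simp
    qed
  qed
qed

lemma tree_w:
  "wf_trie \<sigma> t \<Longrightarrow> wt (preorder_out t) = -1 \<and> (\<forall>i<length (preorder_out t). wt (take i (preorder_out t)) \<ge> 0)
    \<and> (\<forall>S \<in> set (preorder_out t). S \<subseteq> {1..\<sigma>})"
proof (induction t rule: preorder_out.induct)
  case (1 cs)
  have IH: "\<forall>p\<in>set cs. wt (preorder_out (snd p)) = -1 \<and>
             (\<forall>i<length (preorder_out (snd p)). wt (take i (preorder_out (snd p))) \<ge> 0)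
           \<and> (\<forall>S \<in> set (preorder_out (snd p)). S \<subseteq> {1..\<sigma>})"
    using 1 by auto
  have F: "wt (pf cs) = - int (length cs) \<and> (\<forall>i<length (pf cs). wt (take i (pf cs)) > - int (length cs))"
    by (rule forest_w) (use IH in blast)
  have d: "distinct (map fst cs)" using "1.prems" by (simp add: strict_sorted_iff)
  have c: "card (set (map fst cs)) = length cs" using distinct_card[OF d] by simp
  show ?case
  proof (intro conjI allI impI)
    show "wt (preorder_out (Node cs)) = -1" using F c by simp
    fix i assume i: "i < length (preorder_out (Node cs))"
    show "wt (take i (preorder_out (Node cs))) \<ge> 0"
    proof (cases i)
      case 0 then show ?thesis by simp
    next
      case (Suc j)
      then have "j < length (pf cs)" using i by simp
      then have "wt (take j (pf cs)) > - int (length cs)" using F by blast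
      then show ?thesis using F c Suc by simp
    qed
  next
    show "\<forall>S \<in> set (preorder_out (Node cs)). S \<subseteq> {1..\<sigma>}"
      using IH "1.prems" by auto
  qed
qed

lemma count_edge:
  "wf_trie \<sigma> t \<Longrightarrow> count_list (edge_labels t) c = length (filter (\<lambda>S. c \<in> S) (preorder_out t))"
proof (induction t rule: preorder_out.induct)
  case (1 cs)
  have IH: "\<forall>p\<in>set cs. count_list (edge_labels (snd p)) c = length (filter (\<lambda>S. c \<in> S) (preorder_out (snd p)))"
    using 1 by auto
  have gen: "count_list (concat (map (\<lambda>p. fst p # edge_labels (snd p)) ds)) c
     = count_list (map fst ds) c + length (filter (\<lambda>S. c \<in> S) (pf ds))" if "set ds \<subseteq> set cs" for ds
    using that IH by (induction ds) auto
  have d: "distinct (map fst cs)" using "1.prems" by (simp add: strict_sorted_iff)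
  have "count_list (map fst cs) c = (if c \<in> set (map fst cs) then 1 else 0)"
    using d by (induction cs) auto
  then show ?case using gen[of cs] by simp
qed

lemma build:
  "\<forall>S\<in>set xs. S \<subseteq> {1..\<sigma>} \<Longrightarrow> wt xs = - int k \<Longrightarrow> (\<forall>i<length xs. wt (take i xs) > - int k)
   \<Longrightarrow> length ls = k \<Longrightarrow>
   \<exists>cs. map fst cs = ls \<and> pf cs = xs \<and> (\<forall>p\<in>set cs. wf_trie \<sigma> (snd p))"
proof (induction "length xs" arbitrary: xs k ls rule: less_induct)
  case less
  show ?case
  proof (cases ls)
    case Nil
    then have k: "k = 0" using less.prems by simp
    have "xs = []"
    proof (rule ccontr)
      assume "xs \<noteq> []"
      then have "wt (take 0 xs) > 0" using less.prems(3) k by auto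
      then show False by simp
    qed
    then show ?thesis using Nil by simp
  next
    case (Cons l ls')
    define f where "f i = wt (take i xs)" for i
    have ex: "f (length xs) < 0" using less.prems Cons by (simp add: f_def)
    define m where "m = (LEAST m. f m < 0)"
    have fm: "f m < 0" unfolding m_def by (rule LeastI[of _ "length xs"]) (rule ex)
    have mle: "m \<le> length xs" unfolding m_def by (rule Least_le) (rule ex)
    have below: "f i \<ge> 0" if "i < m" for i
      using not_less_Least[OF that[unfolded m_def]] by (simp add: m_def)
    have m0: "m \<noteq> 0" using fm by (cases m) (auto simp: f_def)
    have "take m xs = take (m - 1) xs @ [xs ! (m - 1)]"
      using m0 mle by (metis Suc_diff_1 Suc_le_lessD bot_nat_0.not_eq_extremum take_Suc_conv_app_nth)
    then have "f m = f (m - 1) + int (card (xs ! (m - 1))) - 1" by (simp add: f_def)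
    moreover have "f (m - 1) \<ge> 0" using below m0 by simp
    ultimately have fm1: "f m = -1" using fm by simp
    define a where "a = take m xs"
    define b where "b = drop m xs"
    have xs: "xs = a @ b" by (simp add: a_def b_def)
    have la: "length a = m" using mle by (simp add: a_def)
    obtain S rest where a: "a = S # rest" using la m0 by (cases a) auto
    have Ssub: "S \<subseteq> {1..\<sigma>}" "\<forall>T\<in>set rest. T \<subseteq> {1..\<sigma>}" using less.prems(1) xs a by auto
    have wa: "wt a = -1" using fm1 by (simp add: f_def a_def)
    then have wrest: "wt rest = - int (card S)" using a by simp
    have prest: "\<forall>j<length rest. wt (take j rest) > - int (card S)"
    proof (intro allI impI)
      fix j assume j: "j < length rest"
      then have "Suc j < m" using la a by simp
      then have "f (Suc j) \<ge> 0" by (rule below)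
      moreover have "take (Suc j) xs = S # take j rest" using xs a j by simp
      ultimately show "wt (take j rest) > - int (card S)" by (simp add: f_def)
    qed
    have "length rest < length xs" using xs a by simp
    from less.hyps[OF this Ssub(2) wrest prest, of "sorted_list_of_set S"]
    obtain cs1 where cs1: "map fst cs1 = sorted_list_of_set S" "pf cs1 = rest" "\<forall>p\<in>set cs1. wf_trie \<sigma> (snd p)"
      using finite_subset[OF Ssub(1)] by auto
    define t where "t = Node cs1"
    have fS: "finite S" using finite_subset[OF Ssub(1)] by simp
    have pt: "preorder_out t = a" using cs1 a fS by (simp add: t_def)
    have wft: "wf_trie \<sigma> t" using cs1 Ssub(1) fS by (auto simp: t_def)
    have wb: "wt b = - int (length ls')" using less.prems(2,4) xs wa Cons by simp
    have pb: "\<forall>j<length b. wt (take j b) > - int (length ls')"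
    proof (intro allI impI)
      fix j assume j: "j < length b"
      then have "m + j < length xs" using xs la by simp
      then have "wt (take (m + j) xs) > - int k" using less.prems(3) by blast
      moreover have "take (m + j) xs = a @ take j b" using xs la by simp
      ultimately show "wt (take j b) > - int (length ls')" using wa less.prems(4) Cons by simp
    qed
    have "length b < length xs" using xs la m0 by simp
    from less.hyps[OF this _ wb pb, of ls'] less.prems(1) xs
    obtain cs2 where cs2: "map fst cs2 = ls'" "pf cs2 = b" "\<forall>p\<in>set cs2. wf_trie \<sigma> (snd p)"
      by auto
    show ?thesis
      by (rule exI[of _ "(l, t) # cs2"]) (use cs2 pt wft xs Cons in simp)
  qed
qed

lemma len_filter_upt: "length (filter Q [1..<n+1]) = card {j\<in>{1..n}. Q j}"
proof -
  have "length (filter Q [1..<n+1]) = card (set (filter Q [1..<n+1]))"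
    by (rule distinct_card[symmetric]) simp
  also have "set (filter Q [1..<n+1]) = {j\<in>{1..n}. Q j}" by auto
  finally show ?thesis .
qed

lemma seqL_Suc: "seqL \<sigma> M (Suc i) = seqL \<sigma> M i + seqD \<sigma> M (Suc i)"
  by (simp add: seqL_def)

lemma seqL_cols:
  "i \<le> n \<Longrightarrow> seqL \<sigma> M i = wt (take i (map (\<lambda>j. {k\<in>{1..\<sigma>}. M k j}) [1..<n+1]))"
proof (induction i)
  case 0
  then show ?case by (simp add: seqL_def)
next
  case (Suc i)
  let ?c = "map (\<lambda>j. {k\<in>{1..\<sigma>}. M k j}) [1..<n+1]"
  have "take (Suc i) ?c = take i ?c @ [?c ! i]"
    using Suc.prems by (intro take_Suc_conv_app_nth) (simp del: upt_Suc)
  moreover have "?c ! i = {k\<in>{1..\<sigma>}. M k (Suc i)}" using Suc.prems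
    by (simp del: upt_Suc)
  ultimately show ?case using Suc by (simp add: seqL_Suc seqD_def del: upt_Suc)
qed

theorem lemma2:
  fixes \<sigma> n :: nat and ns :: "nat \<Rightarrow> nat" and M :: "nat \<Rightarrow> nat \<Rightarrow> bool"
  assumes "n \<ge> 1"
    and "(\<Sum>c = 1..\<sigma>. ns c) = n - 1"
    and "M \<in> mats_M \<sigma> n ns"
  shows "M \<in> f_map \<sigma> ` tries_U \<sigma> n ns \<longleftrightarrow> lukasiewicz_path n (seqL \<sigma> M)"
proof -
  define cols where "cols = map (\<lambda>j. {k\<in>{1..\<sigma>}. M k j}) [1..<n+1]"
  have lc: "length cols = n" by (simp add: cols_def)
  have L: "seqL \<sigma> M i = wt (take i cols)" if "i \<le> n" for i
    using seqL_cols[OF that] by (simp add: cols_def)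
  have colsnth: "cols ! k = {i\<in>{1..\<sigma>}. M i (Suc k)}" if "k < n" for k
    using that by (simp add: cols_def del: upt_Suc)
  have Msupp: "M i j \<Longrightarrow> i \<in> {1..\<sigma>} \<and> j \<in> {1..n}" for i j
    using assms(3) by (auto simp: mats_M_def)
  have step: "seqL \<sigma> M (i + 1) - seqL \<sigma> M i \<ge> -1" for i
    by (simp add: seqL_Suc seqD_def)
  show ?thesis
  proof
    assume "M \<in> f_map \<sigma> ` tries_U \<sigma> n ns"
    then obtain T where T: "T \<in> tries_U \<sigma> n ns" and MT: "M = f_map \<sigma> T" by auto
    have wf: "wf_trie \<sigma> T" and nn: "length (preorder_out T) = n"
      using T by (auto simp: tries_U_def num_nodes_def)
    note tw = tree_w[OF wf]
    have "cols = preorder_out T"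
    proof (rule nth_equalityI)
      show "length cols = length (preorder_out T)" using lc nn by simp
      fix k assume k: "k < length cols"
      then have sub: "preorder_out T ! k \<subseteq> {1..\<sigma>}" using tw nn lc by auto
      show "cols ! k = preorder_out T ! k"
        using colsnth k lc sub nn by (auto simp: MT f_map_def num_nodes_def)
    qed
    then show "lukasiewicz_path n (seqL \<sigma> M)"
      unfolding lukasiewicz_path_def using tw L nn step by auto
  next
    assume lp: "lukasiewicz_path n (seqL \<sigma> M)"
    have w1: "wt cols = - int 1" using lp L[of n] lc by (simp add: lukasiewicz_path_def)
    have wp: "\<forall>i<length cols. wt (take i cols) > - int 1"
    proof (intro allI impI)
      fix i assume i: "i < length cols"
      show "wt (take i cols) > - int 1"
      proof (cases i)
        case 0 then show ?thesis by simp
      next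
        case (Suc j)
        then have "i \<in> {1..n-1}" using i lc by auto
        then have "seqL \<sigma> M i \<ge> 0" using lp by (simp add: lukasiewicz_path_def)
        then show ?thesis using L[of i] i lc by simp
      qed
    qed
    have subs: "\<forall>S\<in>set cols. S \<subseteq> {1..\<sigma>}" by (auto simp: cols_def)
    obtain cs where cs: "map fst cs = [0]" "pf cs = cols" "\<forall>p\<in>set cs. wf_trie \<sigma> (snd p)"
      using build[OF subs w1 wp, of "[0]"] by (metis One_nat_def length_Cons list.size(3))
    from cs(1) obtain t where cst: "cs = [(0, t)]" by (auto simp: map_eq_Cons_conv)
    have pt: "preorder_out t = cols" and wft: "wf_trie \<sigma> t" using cs cst by auto
    have "t \<in> tries_U \<sigma> n ns"
      unfolding tries_U_def
    proof (intro CollectI conjI ballI)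
      show "wf_trie \<sigma> t" by (rule wft)
      show "num_nodes t = n" using pt lc by (simp add: num_nodes_def)
      fix c assume c: "c \<in> {1..\<sigma>}"
      have "count_list (edge_labels t) c = length (filter (\<lambda>S. c \<in> S) cols)"
        using count_edge[OF wft] pt by simp
      also have "\<dots> = length (filter (\<lambda>j. M c j) [1..<n+1])"
        using c by (simp add: cols_def filter_map o_def del: upt_Suc)
      also have "\<dots> = card {j\<in>{1..n}. M c j}" by (rule len_filter_upt)
      also have "\<dots> = ns c" using assms(3) c by (simp add: mats_M_def)
      finally show "count_list (edge_labels t) c = ns c" .
    qed
    moreover have "f_map \<sigma> t = M"
    proof (intro ext)
      fix i j
      show "f_map \<sigma> t i j = M i j"
      proof (cases "j \<in> {1..n}")
        case True
        then have "cols ! (j - 1) = {i\<in>{1..\<sigma>}. M i j}" using colsnth[of "j-1"] by auto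
        then show ?thesis using True pt lc Msupp[of i j]
          by (auto simp: f_map_def num_nodes_def)
      next
        case False
        then show ?thesis using Msupp[of i j] pt lc by (auto simp: f_map_def num_nodes_def)
      qed
    qed
    ultimately show "M \<in> f_map \<sigma> ` tries_U \<sigma> n ns" by blast
  qed
qed

end
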